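(* Let $(\gamma_{n})_{n\in\mathbb{N}}$ be nonnegative integrable functions on $[0,\infty)$ with $\rho:=\sup_{n\in\mathbb{N}}\int_{0}^{\infty}\gamma_{n}(t)dt<1$. For $M\in\mathbb{N}$ and $s\ge0$ set $C_{M}^{1}(s,M)=1$, $C_{M}^{2}(s,M)=0$, and recursively for $1\le n<M$, $$C_{n}^{1}(s,M):=1+\int_{0}^{s}C_{n+1}^{1}(s-r,M)\gamma_{n}(r)\,dr,$$ $$C_{n}^{2}(s,M):=\int_{0}^{s}\left(C_{n+1}^{2}(s-r,M)+\tfrac{1}{2}[C_{n+1}^{1}(s-r,M)]^{2}\right)\gamma_{n}(r)\,dr.$$ Then for all $M\in\mathbb{N}$, $1\le n\le M$ and $s\ge0$, $$C_{n}^{1}(s,M)\le\frac{1}{1-\rho}\qquad\text{and}\qquad C_{n}^{2}(s,M)\le\frac{1}{(1-\rho)^{3}}.$$ *)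

theory Defs
  imports "HOL-Analysis.Analysis"
begin

function C1 :: "(nat \<Rightarrow> real \<Rightarrow> real) \<Rightarrow> nat \<Rightarrow> nat \<Rightarrow> real \<Rightarrow> real" where
  "C1 g M n s = (if n < M
      then 1 + (LINT r:{0..s}|lborel. C1 g M (Suc n) (s - r) * g n r)
      else 1)"
  by auto
termination by (relation "Wellfounded.measure (\<lambda>(g, M, n, s). M - n)") auto

function C2 :: "(nat \<Rightarrow> real \<Rightarrow> real) \<Rightarrow> nat \<Rightarrow> nat \<Rightarrow> real \<Rightarrow> real" where
  "C2 g M n s = (if n < M
      then (LINT r:{0..s}|lborel.
              (C2 g M (Suc n) (s - r) + (1/2) * (C1 g M (Suc n) (s - r))\<^sup>2) * g n r)
      else 0)"
  by auto
termination by (relation "Wellfounded.measure (\<lambda>(g, M, n, s). M - n)") auto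

end

theory Submission
  imports Defs
begin

lemma key_bound:
  fixes g :: "real \<Rightarrow> real" and a :: "real \<Rightarrow> real"
  assumes gn: "\<And>t. t \<ge> 0 \<Longrightarrow> g t \<ge> 0"
    and gi: "set_integrable lborel {0..} g"
    and gr: "(LINT t:{0..}|lborel. g t) \<le> \<rho>"
    and rho0: "\<rho> \<ge> 0" and B0: "B \<ge> 0"
    and ab: "\<And>r. r \<in> {0..s} \<Longrightarrow> 0 \<le> a r \<and> a r \<le> B"
  shows "0 \<le> (LINT r:{0..s}|lborel. a r * g r) \<and> (LINT r:{0..s}|lborel. a r * g r) \<le> B * \<rho>"
proof
  show "0 \<le> (LINT r:{0..s}|lborel. a r * g r)"
    unfolding set_lebesgue_integral_def
    by (rule integral_nonneg_AE) (auto simp: indicator_def intro!: mult_nonneg_nonneg ab[THEN conjunct1] gn)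
next
  have gs: "set_integrable lborel {0..s} g"
    by (rule set_integrable_subset[OF gi]) auto
  have i1: "(LINT r:{0..s}|lborel. g r) \<le> (LINT t:{0..}|lborel. g t)"
    using gs gi unfolding set_lebesgue_integral_def set_integrable_def
    by (intro integral_mono) (auto simp: indicator_def gn)
  show "(LINT r:{0..s}|lborel. a r * g r) \<le> B * \<rho>"
  proof (cases "set_integrable lborel {0..s} (\<lambda>r. a r * g r)")
    case True
    have "(LINT r:{0..s}|lborel. a r * g r) \<le> (LINT r:{0..s}|lborel. B * g r)"
      using True gs by (intro set_integral_mono) (auto intro!: mult_right_mono ab[THEN conjunct2] gn)
    also have "\<dots> = B * (LINT r:{0..s}|lborel. g r)" by simp
    also have "\<dots> \<le> B * \<rho>" using i1 gr B0 by (intro mult_left_mono) auto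
    finally show ?thesis .
  next
    case False
    then have "(LINT r:{0..s}|lborel. a r * g r) = 0"
      unfolding set_lebesgue_integral_def set_integrable_def
      by (rule not_integrable_integral_eq)
    then show ?thesis using B0 rho0 by simp
  qed
qed

declare C1.simps[simp del] C2.simps[simp del]

theorem lemma4p8:
  fixes \<gamma> :: "nat \<Rightarrow> real \<Rightarrow> real" and \<rho> :: real
  assumes nonneg: "\<And>n t. n \<ge> 1 \<Longrightarrow> t \<ge> 0 \<Longrightarrow> \<gamma> n t \<ge> 0"
    and integ: "\<And>n. n \<ge> 1 \<Longrightarrow> set_integrable lborel {0..} (\<gamma> n)"
    and bdd: "bdd_above ((\<lambda>n. LINT t:{0..}|lborel. \<gamma> n t) ` {1..})"
    and rho_def: "\<rho> = (SUP n\<in>{1..}. LINT t:{0..}|lborel. \<gamma> n t)"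
    and rho_lt: "\<rho> < 1"
    and M: "M \<ge> 1" and n: "1 \<le> n" "n \<le> M" and s: "s \<ge> 0"
  shows "C1 \<gamma> M n s \<le> 1 / (1 - \<rho>) \<and> C2 \<gamma> M n s \<le> 1 / (1 - \<rho>) ^ 3"
proof -
  have gr: "(LINT t:{0..}|lborel. \<gamma> k t) \<le> \<rho>" if "k \<ge> 1" for k
    unfolding rho_def using bdd that by (intro cSUP_upper) auto
  have "0 \<le> (LINT t:{0..}|lborel. \<gamma> 1 t)"
    unfolding set_lebesgue_integral_def
    by (rule integral_nonneg_AE) (auto simp: indicator_def nonneg)
  with gr[of 1] have rho0: "\<rho> \<ge> 0" by simp
  define A where "A = 1 / (1 - \<rho>)"
  have A1: "A \<ge> 1" using rho0 rho_lt by (simp add: A_def field_simps)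
  have Aeq: "1 + A * \<rho> = A" using rho_lt by (simp add: A_def field_simps)
  have Aeq2: "(A^3 + 1/2 * A^2) * \<rho> \<le> A^3"
  proof -
    have "(A^3 + 1/2 * A^2) * \<rho> = A^3 * (\<rho> + \<rho> * (1-\<rho>)/2)"
    proof -
      have e: "A * (1 - \<rho>) = 1" using rho_lt by (simp add: A_def)
      have "A^2 = A^3 * (1-\<rho>)" proof -
        have "A^3 * (1-\<rho>) = A^2 * (A * (1 - \<rho>))" by (simp add: power3_eq_cube power2_eq_square)
        then show ?thesis using e by simp
      qed
      then show ?thesis by (simp only:) (simp add: field_simps)
    qed
    also have "\<dots> \<le> A^3 * 1"
    proof (intro mult_left_mono)
      have "(1-\<rho>)*(2-\<rho>) \<ge> 0" using rho_lt by simp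
      then show "\<rho> + \<rho> * (1-\<rho>)/2 \<le> 1" by (simp add: algebra_simps field_simps)
    qed (use A1 in simp)
    finally show ?thesis by simp
  qed
  have main: "\<forall>k s. 1 \<le> k \<and> k \<le> M \<and> M - k = d \<longrightarrow>
      (1 \<le> C1 \<gamma> M k s \<and> C1 \<gamma> M k s \<le> A \<and> 0 \<le> C2 \<gamma> M k s \<and> C2 \<gamma> M k s \<le> A^3)" for d
  proof (induction d)
    case 0
    show ?case using A1 by (auto simp: C1.simps C2.simps intro!: order_trans[OF zero_le_one A1])
  next
    case (Suc d)
    show ?case
    proof (intro allI impI)
      fix k s assume k: "1 \<le> k \<and> k \<le> M \<and> M - k = Suc d"
      then have kM: "k < M" by linarith
      have IH: "1 \<le> C1 \<gamma> M (Suc k) r \<and> C1 \<gamma> M (Suc k) r \<le> A \<and> 0 \<le> C2 \<gamma> M (Suc k) r \<and> C2 \<gamma> M (Suc k) r \<le> A^3" for r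
      proof -
        have "M - Suc k = d" "1 \<le> Suc k" "Suc k \<le> M" using k by auto
        then show ?thesis using Suc.IH by blast
      qed
      have I1: "0 \<le> (LINT r:{0..s}|lborel. C1 \<gamma> M (Suc k) (s - r) * \<gamma> k r) \<and>
          (LINT r:{0..s}|lborel. C1 \<gamma> M (Suc k) (s - r) * \<gamma> k r) \<le> A * \<rho>"
        using k IH A1 by (intro key_bound[OF _ integ gr rho0]) (auto intro: nonneg order_trans[of 0 1])
      have I2: "0 \<le> (LINT r:{0..s}|lborel. (C2 \<gamma> M (Suc k) (s - r) + (1/2) * (C1 \<gamma> M (Suc k) (s - r))\<^sup>2) * \<gamma> k r) \<and>
          (LINT r:{0..s}|lborel. (C2 \<gamma> M (Suc k) (s - r) + (1/2) * (C1 \<gamma> M (Suc k) (s - r))\<^sup>2) * \<gamma> k r) \<le> (A^3 + 1/2 * A^2) * \<rho>"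
      proof (intro key_bound[OF _ integ gr rho0])
        fix r :: real assume "r \<in> {0..s}"
        have c: "0 \<le> C1 \<gamma> M (Suc k) (s - r)" "C1 \<gamma> M (Suc k) (s - r) \<le> A" using IH[of "s-r"] by auto
        have sq: "(C1 \<gamma> M (Suc k) (s - r))\<^sup>2 \<le> A^2" using c by (intro power_mono) auto
        show "0 \<le> C2 \<gamma> M (Suc k) (s - r) + 1 / 2 * (C1 \<gamma> M (Suc k) (s - r))\<^sup>2 \<and>
          C2 \<gamma> M (Suc k) (s - r) + 1 / 2 * (C1 \<gamma> M (Suc k) (s - r))\<^sup>2 \<le> A ^ 3 + 1 / 2 * A\<^sup>2"
          using IH[of "s-r"] sq by (intro conjI; simp only: ; linarith?) (simp add: add_nonneg_nonneg)
      qed (use k A1 in \<open>auto intro: nonneg\<close>)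
      have "C1 \<gamma> M k s = 1 + (LINT r:{0..s}|lborel. C1 \<gamma> M (Suc k) (s - r) * \<gamma> k r)"
        using kM by (subst C1.simps) simp
      moreover have "C2 \<gamma> M k s = (LINT r:{0..s}|lborel. (C2 \<gamma> M (Suc k) (s - r) + (1/2) * (C1 \<gamma> M (Suc k) (s - r))\<^sup>2) * \<gamma> k r)"
        using kM by (subst C2.simps) simp
      ultimately show "1 \<le> C1 \<gamma> M k s \<and> C1 \<gamma> M k s \<le> A \<and> 0 \<le> C2 \<gamma> M k s \<and> C2 \<gamma> M k s \<le> A^3"
        using I1 I2 Aeq Aeq2 by linarith
    qed
  qed
  from main[of "M - n"] n have "C1 \<gamma> M n s \<le> A \<and> C2 \<gamma> M n s \<le> A^3" by blast
  then show ?thesis by (simp add: A_def power_one_over)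
qed

end
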